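(* Let $P(t)=\binom{r+t}{r}-\binom{r+t-d}{r}$ and let $x\in\mathrm{Hilb}^P(\mathbb{P}^r_k)$ be unstable at level $d$ with $x\in E_{d,[\lambda],\delta}$, where $\lambda=(a_0,\dots,a_r)\in\Gamma(T)$ is indivisible (so $\sum_{i=0}^r a_i=0$) and $\delta>0$. Let $b=\max_i a_i$ and $a=\min_i a_i$. Then the multiplicity $n_{H_x}$ of the hypersurface $H_x$ represented by $x$ satisfies $$\frac{\Vert\lambda\Vert\delta-ad}{b-a}\;\le\; n_{H_x}\;\le\;\frac{rd}{r+1}-\delta\,\frac{a}{\Vert\lambda\Vert}.$$
   Context: Let $k$ be an algebraically closed field, $r\ge1$, $d\ge1$, $S=k[x_0,\dots,x_r]$, $S_d$ its degree-$d$ part. With $P(t)=\binom{r+t}{r}-\binom{r+t-d}{r}$, a point $x$ of $\mathrm{Hilb}^P(\mathbb{P}^r_k)$ is a hypersurface $H_x=V(f)$, $0\ne f\in S_d$, with $d$-th Hilbert point $\phi_d(x)=[f]\in\mathbb{P}(S_d)$. $G=\mathrm{GL}_{r+1}(k)$ acts on $S_1=\mathrm{span}(x_0,\dots,x_r)$ by the standard representation and hence on $S$ and on the Hilbert scheme; $H=\mathrm{SL}_{r+1}(k)$, $T$ its diagonal torus. $\lambda=(a_0,\dots,a_r)\in\mathbb{Z}^{r+1}$, $\sum a_i=0$, denotes $s\mapsto\mathrm{diag}(s^{a_0},\dots,s^{a_r})\in\Gamma(T)$; it multiplies $x_0^{e_0}\cdots x_r^{e_r}$ by $s^{\sum a_ie_i}$.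 $\Vert\cdot\Vert$ is a conjugation-invariant norm on one-parameter subgroups of $G$ equal to the Euclidean norm on diagonal ones. For $\lambda\in\Gamma(H)$, $\mu(\phi_d(x),\lambda)$ is the minimal $i$ such that the $s^i$-weight component of $f$ under $\lambda$ is nonzero. $\Lambda_{x,d}$ is the set of indivisible $\lambda\in\Gamma(H)$ (not an integer multiple $\ge2$ of another) maximizing $\mu(\phi_d(x),\lambda)/\Vert\lambda\Vert$; $x$ is unstable at level $d$ if this maximum is positive. For indivisible $\lambda\in\Gamma(T)$ and $\delta>0$, the Hesselink stratum $E_{d,[\lambda],\delta}$ is the set of $x$ such that $\Lambda_{x,d}$ meets the $G$-conjugacy class $[\lambda]$ and the maximal value of $\mu(\phi_d(x),\cdot)/\Vert\cdot\Vert$ is $\delta$. Multiplicity: for $X=V(f)$ and $e=[1:0:\cdots:0]$, writing $f=\sum_j x_0^{d-j}f_j(x_1,\dots,x_r)$ with $f_j$ homogeneous of degree $j$, $n_{e,X}=\min\{j:f_j\ne0\}$; for a point $p$, $n_{p,X}$ is defined likewise after a linear coordinate change sending $p$ to $e$ (coordinate independent; equal to the degree of the tangent cone at $p$), and $n_X=\max_{p}n_{p,X}$. *)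

theory Defs
  imports "HOL-Computational_Algebra.Polynomial" "HOL-Library.Poly_Mapping"
begin

(* The ring structure is the
  monoid algebra from Poly_Mapping. *)

type_synonym 'k mpoly = "(nat \<Rightarrow>\<^sub>0 nat) \<Rightarrow>\<^sub>0 'k"

definition Xvar :: "nat \<Rightarrow> 'k::comm_ring_1 mpoly" where
  "Xvar i = Poly_Mapping.single (Poly_Mapping.single i 1) 1"

definition monom_of :: "(nat \<Rightarrow>\<^sub>0 nat) \<Rightarrow> 'k::comm_ring_1 mpoly" where
  "monom_of e = Poly_Mapping.single e 1"

definition homog_form :: "nat \<Rightarrow> nat \<Rightarrow> 'k::comm_ring_1 mpoly \<Rightarrow> bool" where
  "homog_form r d f \<longleftrightarrow> f \<noteq> 0 \<and>
     (\<forall>e \<in> Poly_Mapping.keys f. (\<forall>i>r. Poly_Mapping.lookup e i = 0) \<and> (\<Sum>i\<le>r. Poly_Mapping.lookup e i) = d)"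

definition invertible_mat :: "nat \<Rightarrow> (nat \<Rightarrow> nat \<Rightarrow> 'k::field) \<Rightarrow> bool" where
  "invertible_mat r M \<longleftrightarrow> (\<exists>N. \<forall>i\<le>r. \<forall>j\<le>r.
      (\<Sum>l\<le>r. M i l * N l j) = (if i = j then 1 else 0) \<and>
      (\<Sum>l\<le>r. N i l * M l j) = (if i = j then 1 else 0))"

definition lin_subst :: "nat \<Rightarrow> (nat \<Rightarrow> nat \<Rightarrow> 'k::field) \<Rightarrow> 'k mpoly \<Rightarrow> 'k mpoly" where
  "lin_subst r M f = (\<Sum>e\<in>Poly_Mapping.keys f. Poly_Mapping.single 0 (Poly_Mapping.lookup f e) *
       (\<Prod>i\<le>r. (\<Sum>j\<le>r. Poly_Mapping.single 0 (M i j) * Xvar j) ^ Poly_Mapping.lookup e i))"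

(* Weight of the monomial x^e under the diagonal one-parameter subgroup
  s \<mapsto> diag(s^{a_0},...,s^{a_r}). *)
definition weight :: "nat \<Rightarrow> (nat \<Rightarrow> int) \<Rightarrow> (nat \<Rightarrow>\<^sub>0 nat) \<Rightarrow> int" where
  "weight r a e = (\<Sum>i\<le>r. a i * int (Poly_Mapping.lookup e i))"

definition mu_diag :: "nat \<Rightarrow> (nat \<Rightarrow> int) \<Rightarrow> 'k::comm_ring_1 mpoly \<Rightarrow> int" where
  "mu_diag r a f = Min (weight r a ` Poly_Mapping.keys f)"

(* One-parameter subgroups of SL_{r+1}: every one is g lambda_a g^{-1} with lambda_a
  diagonal, sum a_i = 0. mu([f], g lambda_a g^{-1}) = mu([g^{-1} f], lambda_a); we
  parametrize the conjugating element through the substitution matrix M. *)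
definition mu_ops :: "nat \<Rightarrow> (nat \<Rightarrow> nat \<Rightarrow> 'k::field) \<Rightarrow> (nat \<Rightarrow> int) \<Rightarrow> 'k mpoly \<Rightarrow> int" where
  "mu_ops r M a f = mu_diag r a (lin_subst r M f)"

definition onepar_norm :: "nat \<Rightarrow> (nat \<Rightarrow> int) \<Rightarrow> real" where
  "onepar_norm r a = sqrt (\<Sum>i\<le>r. (real_of_int (a i))\<^sup>2)"

definition nontriv_onepar :: "nat \<Rightarrow> (nat \<Rightarrow> int) \<Rightarrow> bool" where
  "nontriv_onepar r a \<longleftrightarrow> (\<Sum>i\<le>r. a i) = 0 \<and> (\<exists>i\<le>r. a i \<noteq> 0)"

definition indivisible :: "nat \<Rightarrow> (nat \<Rightarrow> int) \<Rightarrow> bool" where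
  "indivisible r a \<longleftrightarrow> \<not> (\<exists>m::int. m \<ge> 2 \<and> (\<exists>c. \<forall>i\<le>r. a i = m * c i))"

definition mu_ratio :: "nat \<Rightarrow> (nat \<Rightarrow> nat \<Rightarrow> 'k::field) \<Rightarrow> (nat \<Rightarrow> int) \<Rightarrow> 'k mpoly \<Rightarrow> real" where
  "mu_ratio r M a f = real_of_int (mu_ops r M a f) / onepar_norm r a"

definition max_ratio :: "nat \<Rightarrow> 'k::field mpoly \<Rightarrow> real" where
  "max_ratio r f = (SUP p \<in> {(M, a). invertible_mat r M \<and> nontriv_onepar r a}.
                      mu_ratio r (fst p) (snd p) f)"

definition unstable :: "nat \<Rightarrow> 'k::field mpoly \<Rightarrow> bool" where
  "unstable r f \<longleftrightarrow> max_ratio r f > 0"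

(* x \<in> E_{d,[lambda_a],delta}: the maximum of mu/||.|| equals delta and is attained at a
  conjugate of lambda_a (a indivisible, so that conjugate is indivisible and lies in Lambda_{x,d}). *)
definition in_stratum :: "nat \<Rightarrow> 'k::field mpoly \<Rightarrow> (nat \<Rightarrow> int) \<Rightarrow> real \<Rightarrow> bool" where
  "in_stratum r f a \<delta> \<longleftrightarrow> indivisible r a \<and> nontriv_onepar r a \<and>
     (\<exists>M. invertible_mat r M \<and> (\<forall>M' a'. invertible_mat r M' \<and> nontriv_onepar r a' \<longrightarrow>
          mu_ratio r M' a' f \<le> mu_ratio r M a f) \<and> mu_ratio r M a f = \<delta>)"

(* Multiplicity of V(f) at the point p (nonzero vector of k^{r+1}): change coordinates
  by a matrix M with first column p (so p \<mapsto> e = [1:0:...:0]); n = min{j : f_j \<noteq> 0}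
  where f = \<Sum>_j x_0^{d-j} f_j. *)
definition mult_at :: "nat \<Rightarrow> nat \<Rightarrow> 'k::field mpoly \<Rightarrow> (nat \<Rightarrow> 'k) \<Rightarrow> nat" where
  "mult_at r d f p = (let M = (SOME M. invertible_mat r M \<and> (\<forall>i\<le>r. M i 0 = p i));
                          g = lin_subst r M f
                      in LEAST j. \<exists>e\<in>Poly_Mapping.keys g. Poly_Mapping.lookup e 0 = d - j)"

definition hyp_mult :: "nat \<Rightarrow> nat \<Rightarrow> 'k::field mpoly \<Rightarrow> nat" where
  "hyp_mult r d f = Max {mult_at r d f p | p. \<exists>i\<le>r. p i \<noteq> 0}"

end

theory Submission
  imports Defs
begin

definition cst :: "'k::comm_ring_1 \<Rightarrow> 'k mpoly" where "cst c = Poly_Mapping.single 0 c"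
definition mon :: "nat \<Rightarrow> (nat \<Rightarrow> 'k::comm_ring_1 mpoly) \<Rightarrow> (nat \<Rightarrow>\<^sub>0 nat) \<Rightarrow> 'k mpoly" where
  "mon r h e = (\<Prod>i\<le>r. h i ^ Poly_Mapping.lookup e i)"
definition ev :: "nat \<Rightarrow> (nat \<Rightarrow> 'k::comm_ring_1 mpoly) \<Rightarrow> 'k mpoly \<Rightarrow> 'k mpoly" where
  "ev r h p = (\<Sum>e\<in>Poly_Mapping.keys p. cst (Poly_Mapping.lookup p e) * mon r h e)"

lemma cst_add: "cst (a + b) = cst a + cst b" by (simp add: cst_def single_add)
lemma cst_mult: "cst (a * b) = cst a * cst b" by (simp add: cst_def mult_single)
lemma cst_0[simp]: "cst 0 = 0" by (simp add: cst_def)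
lemma cst_1[simp]: "cst 1 = 1" by (simp add: cst_def)

lemma mon_add: "mon r h (e + e') = mon r h e * mon r h e'"
  by (simp add: mon_def lookup_add power_add prod.distrib)

lemma ev_superset:
  assumes "finite S" "Poly_Mapping.keys p \<subseteq> S"
  shows "ev r h p = (\<Sum>e\<in>S. cst (Poly_Mapping.lookup p e) * mon r h e)"
  unfolding ev_def
  by (rule sum.mono_neutral_left) (use assms in \<open>auto simp: in_keys_iff\<close>)

lemma ev_add: "ev r h (p + q) = ev r h p + ev r h q"
proof -
  define S where "S = Poly_Mapping.keys p \<union> Poly_Mapping.keys q"
  have fS: "finite S" by (simp add: S_def)
  have "ev r h (p + q) = (\<Sum>e\<in>S. cst (Poly_Mapping.lookup (p+q) e) * mon r h e)"
    by (rule ev_superset[OF fS]) (use keys_add[of p q] in \<open>auto simp: S_def\<close>)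
  also have "\<dots> = (\<Sum>e\<in>S. cst (Poly_Mapping.lookup p e) * mon r h e) + (\<Sum>e\<in>S. cst (Poly_Mapping.lookup q e) * mon r h e)"
    by (simp add: lookup_add cst_add distrib_right sum.distrib)
  also have "\<dots> = ev r h p + ev r h q"
    using ev_superset[OF fS, of p] ev_superset[OF fS, of q] by (simp add: S_def)
  finally show ?thesis .
qed

lemma ev_0[simp]: "ev r h 0 = 0" by (simp add: ev_def)

lemma ev_sum: "ev r h (\<Sum>x\<in>I. F x) = (\<Sum>x\<in>I. ev r h (F x))"
  by (induction I rule: infinite_finite_induct) (auto simp: ev_add)

lemma ev_single: "ev r h (Poly_Mapping.single e c) = cst c * mon r h e"
  by (simp add: ev_def)

lemma pm_expand: "p = (\<Sum>e\<in>Poly_Mapping.keys p. Poly_Mapping.single e (Poly_Mapping.lookup p e))"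
proof (rule poly_mapping_eqI)
  fix k
  show "Poly_Mapping.lookup p k = Poly_Mapping.lookup (\<Sum>e\<in>Poly_Mapping.keys p. Poly_Mapping.single e (Poly_Mapping.lookup p e)) k"
    by (auto simp: lookup_sum lookup_single when_def in_keys_iff)
qed

lemma ev_mult: "ev r h (p * q) = ev r h p * ev r h q"
proof -
  have "p * q = (\<Sum>e\<in>Poly_Mapping.keys p. Poly_Mapping.single e (Poly_Mapping.lookup p e)) *
                (\<Sum>e'\<in>Poly_Mapping.keys q. Poly_Mapping.single e' (Poly_Mapping.lookup q e'))"
    using pm_expand[of p] pm_expand[of q] by simp
  also have "\<dots> = (\<Sum>e\<in>Poly_Mapping.keys p. \<Sum>e'\<in>Poly_Mapping.keys q.
        Poly_Mapping.single (e + e') (Poly_Mapping.lookup p e * Poly_Mapping.lookup q e'))"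
    by (simp add: sum_distrib_left sum_distrib_right mult_single) (rule sum.swap)
  finally have "ev r h (p * q) = (\<Sum>e\<in>Poly_Mapping.keys p. \<Sum>e'\<in>Poly_Mapping.keys q.
        cst (Poly_Mapping.lookup p e) * mon r h e * (cst (Poly_Mapping.lookup q e') * mon r h e'))"
    by (simp add: ev_sum ev_single cst_mult mon_add mult_ac)
  also have "\<dots> = ev r h p * ev r h q"
    by (simp add: ev_def sum_distrib_left sum_distrib_right) (rule sum.swap)
  finally show ?thesis .
qed

lemma ev_cst: "ev r h (cst c) = cst c"
  by (simp add: cst_def ev_single mon_def)

lemma ev_1[simp]: "ev r h 1 = 1"
  using ev_cst[of r h 1] by simp

lemma ev_prod: "ev r h (\<Prod>x\<in>I. F x) = (\<Prod>x\<in>I. ev r h (F x))"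
  by (induction I rule: infinite_finite_induct) (auto simp: ev_mult)

lemma ev_power: "ev r h (p ^ n) = ev r h p ^ n"
  by (induction n) (auto simp: ev_mult)

lemma ev_Xvar: "i \<le> r \<Longrightarrow> ev r h (Xvar i) = h i"
proof -
  assume i: "i \<le> r"
  have "mon r h (Poly_Mapping.single i 1) = (\<Prod>l\<le>r. if l = i then h i else 1)"
    unfolding mon_def by (rule prod.cong) (auto simp: lookup_single when_def)
  also have "\<dots> = h i" using i by (simp add: prod.delta)
  finally show ?thesis by (simp add: Xvar_def ev_single)
qed

lemma ev_comp: "ev r h' (ev r h p) = ev r (\<lambda>i. ev r h' (h i)) p"
  unfolding ev_def[of r h p]
  by (simp add: ev_sum ev_mult ev_cst mon_def ev_prod ev_power ev_def[of r "\<lambda>i. ev r h' (h i)"])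


definition lin_form :: "nat \<Rightarrow> (nat \<Rightarrow> nat \<Rightarrow> 'k::field) \<Rightarrow> nat \<Rightarrow> 'k mpoly" where
  "lin_form r M i = (\<Sum>j\<le>r. cst (M i j) * Xvar j)"

lemma lin_subst_ev: "lin_subst r M f = ev r (lin_form r M) f"
  by (simp add: lin_subst_def ev_def mon_def lin_form_def cst_def)

definition mm :: "nat \<Rightarrow> (nat \<Rightarrow> nat \<Rightarrow> 'k::field) \<Rightarrow> (nat \<Rightarrow> nat \<Rightarrow> 'k) \<Rightarrow> nat \<Rightarrow> nat \<Rightarrow> 'k" where
  "mm r A B i j = (\<Sum>l\<le>r. A i l * B l j)"

definition Idm :: "nat \<Rightarrow> nat \<Rightarrow> 'k::field" where "Idm i j = (if i = j then 1 else 0)"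

lemma ifmul1: "(if P then 1 else 0) * (x::'a::semiring_1) = (if P then x else 0)" by simp
lemma ifmul2: "(x::'a::semiring_1) * (if P then 1 else 0) = (if P then x else 0)" by simp
lemma ifmul3: "cst (if P then 1 else 0) * x = (if P then x else 0)" by simp

lemma cst_sum: "cst (\<Sum>x\<in>I. F x) = (\<Sum>x\<in>I. cst (F x))"
  by (induction I rule: infinite_finite_induct) (auto simp: cst_add)

lemma ev_cong: "(\<And>i. i \<le> r \<Longrightarrow> h i = h' i) \<Longrightarrow> ev r h p = ev r h' p"
  unfolding ev_def mon_def by (intro sum.cong refl arg_cong2[where f="(*)"] prod.cong) auto

lemma ev_lin_form: "ev r (lin_form r A) (lin_form r B i) = lin_form r (mm r B A) i"
proof -
  have "ev r (lin_form r A) (lin_form r B i) = (\<Sum>j\<le>r. cst (B i j) * (\<Sum>k\<le>r. cst (A j k) * Xvar k))"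
    unfolding lin_form_def[of r B] by (simp add: ev_sum ev_mult ev_cst ev_Xvar lin_form_def)
  also have "\<dots> = (\<Sum>j\<le>r. \<Sum>k\<le>r. cst (B i j * A j k) * Xvar k)"
    by (simp add: sum_distrib_left cst_mult mult_ac)
  also have "\<dots> = (\<Sum>k\<le>r. \<Sum>j\<le>r. cst (B i j * A j k) * Xvar k)"
    by (rule sum.swap)
  also have "\<dots> = lin_form r (mm r B A) i"
    by (simp add: lin_form_def mm_def cst_sum sum_distrib_right)
  finally show ?thesis .
qed

lemma lin_subst_comp: "lin_subst r A (lin_subst r B f) = lin_subst r (mm r B A) f"
  by (simp add: lin_subst_ev ev_comp ev_lin_form)

lemma lin_subst_cong: "(\<And>i j. i \<le> r \<Longrightarrow> j \<le> r \<Longrightarrow> M i j = M' i j) \<Longrightarrow> lin_subst r M f = lin_subst r M' f"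
  unfolding lin_subst_ev by (rule ev_cong) (simp add: lin_form_def)

lemma lin_subst_0[simp]: "lin_subst r M 0 = 0" by (simp add: lin_subst_ev)

lemma Xvar_power: "Xvar i ^ n = Poly_Mapping.single (Poly_Mapping.single i n) 1"
  by (induction n) (auto simp: Xvar_def mult_single single_add[symmetric] add.commute)

lemma prod_single1: "(\<Prod>i\<in>I. Poly_Mapping.single (g i) (1::'k::comm_ring_1)) = Poly_Mapping.single (\<Sum>i\<in>I. g i) 1"
  by (induction I rule: infinite_finite_induct) (auto simp: mult_single)

lemma lin_subst_Id:
  assumes "\<forall>e\<in>Poly_Mapping.keys f. \<forall>i>r. Poly_Mapping.lookup e i = 0"
  shows "lin_subst r Idm f = f"
proof -
  have "lin_subst r Idm f = ev r Xvar f"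
    unfolding lin_subst_ev
    by (rule ev_cong) (simp add: lin_form_def Idm_def ifmul3)
  also have "\<dots> = (\<Sum>e\<in>Poly_Mapping.keys f. Poly_Mapping.single e (Poly_Mapping.lookup f e))"
    unfolding ev_def
  proof (rule sum.cong[OF refl])
    fix e assume e: "e \<in> Poly_Mapping.keys f"
    have "(\<Sum>i\<le>r. Poly_Mapping.single i (Poly_Mapping.lookup e i)) = e"
    proof (rule poly_mapping_eqI)
      fix k show "Poly_Mapping.lookup (\<Sum>i\<le>r. Poly_Mapping.single i (Poly_Mapping.lookup e i)) k = Poly_Mapping.lookup e k"
        using assms e by (cases "k \<le> r") (auto simp: lookup_sum lookup_single when_def)
    qed
    then show "cst (Poly_Mapping.lookup f e) * mon r Xvar e = Poly_Mapping.single e (Poly_Mapping.lookup f e)"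
      by (simp add: mon_def Xvar_power prod_single1 cst_def mult_single)
  qed
  also have "\<dots> = f" by (rule pm_expand[symmetric])
  finally show ?thesis .
qed

lemma mm_assoc: "mm r (mm r X Y) Z = mm r X (mm r Y Z)"
  by (auto simp: fun_eq_iff mm_def sum_distrib_left sum_distrib_right mult.assoc intro: sum.swap)

lemma mm_Id_left: "i \<le> r \<Longrightarrow> mm r Idm X i j = X i j"
  by (simp add: mm_def Idm_def ifmul1 ifmul2)

lemma mm_Id_right: "j \<le> r \<Longrightarrow> mm r X Idm i j = X i j"
  by (simp add: mm_def Idm_def ifmul1 ifmul2)

lemma mm_cong_left: "(\<And>l. l \<le> r \<Longrightarrow> X i l = X' i l) \<Longrightarrow> mm r X Y i j = mm r X' Y i j"
  by (simp add: mm_def)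

lemma mm_cong_right: "(\<And>l. l \<le> r \<Longrightarrow> Y l j = Y' l j) \<Longrightarrow> mm r X Y i j = mm r X Y' i j"
  by (simp add: mm_def)

lemma invertible_mat_mm_iff:
  "invertible_mat r M \<longleftrightarrow> (\<exists>N. \<forall>i\<le>r. \<forall>j\<le>r. mm r M N i j = Idm i j \<and> mm r N M i j = Idm i j)"
  by (simp add: invertible_mat_def mm_def Idm_def)

lemma inv_aux:
  assumes "\<forall>i\<le>r. \<forall>j\<le>r. mm r B Bi i j = Idm i j" "\<forall>i\<le>r. \<forall>j\<le>r. mm r A Ai i j = Idm i j"
    "i \<le> r" "j \<le> r"
  shows "mm r (mm r A B) (mm r Bi Ai) i j = Idm i j"
proof -
  have "mm r (mm r A B) (mm r Bi Ai) i j = mm r A (mm r (mm r B Bi) Ai) i j"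
    by (simp add: mm_assoc)
  also have "\<dots> = mm r A Ai i j"
  proof (rule mm_cong_right)
    fix l assume l: "l \<le> r"
    have "mm r (mm r B Bi) Ai l j = mm r Idm Ai l j"
      by (rule mm_cong_left) (use assms(1) l in auto)
    then show "mm r (mm r B Bi) Ai l j = Ai l j" using mm_Id_left[OF l] by simp
  qed
  also have "\<dots> = Idm i j" using assms by auto
  finally show ?thesis .
qed

lemma inv_mm: "invertible_mat r A \<Longrightarrow> invertible_mat r B \<Longrightarrow> invertible_mat r (mm r A B)"
  unfolding invertible_mat_mm_iff
proof -
  assume "\<exists>N. \<forall>i\<le>r. \<forall>j\<le>r. mm r A N i j = Idm i j \<and> mm r N A i j = Idm i j"
  then obtain Ai where A: "\<forall>i\<le>r. \<forall>j\<le>r. mm r A Ai i j = Idm i j \<and> mm r Ai A i j = Idm i j" by blast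
  assume "\<exists>N. \<forall>i\<le>r. \<forall>j\<le>r. mm r B N i j = Idm i j \<and> mm r N B i j = Idm i j"
  then obtain Bi where B: "\<forall>i\<le>r. \<forall>j\<le>r. mm r B Bi i j = Idm i j \<and> mm r Bi B i j = Idm i j" by blast
  show "\<exists>N. \<forall>i\<le>r. \<forall>j\<le>r. mm r (mm r A B) N i j = Idm i j \<and> mm r N (mm r A B) i j = Idm i j"
    by (rule exI[of _ "mm r Bi Ai"]) (use A B in \<open>auto intro!: inv_aux\<close>)
qed


definition additive :: "((nat \<Rightarrow>\<^sub>0 nat) \<Rightarrow> int) \<Rightarrow> bool" where
  "additive \<phi> \<longleftrightarrow> (\<forall>x y. \<phi> (x + y) = \<phi> x + \<phi> y)"

definition Gr :: "((nat \<Rightarrow>\<^sub>0 nat) \<Rightarrow> int) \<Rightarrow> int \<Rightarrow> 'k::comm_ring_1 mpoly set" where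
  "Gr \<phi> w = {p. \<forall>e\<in>Poly_Mapping.keys p. w \<le> \<phi> e}"

lemma additive_0: "additive \<phi> \<Longrightarrow> \<phi> 0 = 0"
  unfolding additive_def by (metis add.right_neutral add_cancel_right_right)

lemma Gr_0[simp]: "0 \<in> Gr \<phi> w" by (simp add: Gr_def)

lemma Gr_add: "p \<in> Gr \<phi> w \<Longrightarrow> q \<in> Gr \<phi> w \<Longrightarrow> p + q \<in> Gr \<phi> w"
  using keys_add[of p q] by (auto simp: Gr_def)

lemma Gr_sum: "(\<And>x. x \<in> I \<Longrightarrow> F x \<in> Gr \<phi> w) \<Longrightarrow> (\<Sum>x\<in>I. F x) \<in> Gr \<phi> w"
  by (induction I rule: infinite_finite_induct) (auto intro: Gr_add)

lemma Gr_mono: "p \<in> Gr \<phi> w \<Longrightarrow> w' \<le> w \<Longrightarrow> p \<in> Gr \<phi> w'"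
  by (auto simp: Gr_def)

lemma Gr_mult: "additive \<phi> \<Longrightarrow> p \<in> Gr \<phi> w \<Longrightarrow> q \<in> Gr \<phi> v \<Longrightarrow> p * q \<in> Gr \<phi> (w + v)"
  using keys_mult[of p q] unfolding Gr_def additive_def by (fastforce intro: add_mono)

lemma Gr_cst: "additive \<phi> \<Longrightarrow> cst c \<in> Gr \<phi> 0"
  by (auto simp: Gr_def cst_def additive_0 split: if_splits)

lemma Gr_power: "additive \<phi> \<Longrightarrow> p \<in> Gr \<phi> w \<Longrightarrow> p ^ n \<in> Gr \<phi> (int n * w)"
proof (induction n)
  case 0 then show ?case using Gr_cst[of \<phi> 1] by simp
next
  case (Suc n)
  then have "p * p ^ n \<in> Gr \<phi> (w + int n * w)" by (intro Gr_mult) auto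
  then show ?case by (simp add: algebra_simps)
qed

lemma Gr_prod: "additive \<phi> \<Longrightarrow> (\<And>i. i \<in> I \<Longrightarrow> F i \<in> Gr \<phi> (c i)) \<Longrightarrow> (\<Prod>i\<in>I. F i) \<in> Gr \<phi> (\<Sum>i\<in>I. c i)"
proof (induction I rule: infinite_finite_induct)
  case (infinite A) then show ?case using Gr_cst[of \<phi> 1] by simp
next
  case empty then show ?case using Gr_cst[of \<phi> 1] by simp
next
  case (insert x F) then show ?case by (auto intro: Gr_mult)
qed

lemma Gr_ev:
  assumes ad: "additive \<phi>" and h: "\<And>i. i \<le> r \<Longrightarrow> h i \<in> Gr \<phi> (c i)"
    and f: "\<And>e. e \<in> Poly_Mapping.keys f \<Longrightarrow> w \<le> (\<Sum>i\<le>r. c i * int (Poly_Mapping.lookup e i))"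
  shows "ev r h f \<in> Gr \<phi> w"
  unfolding ev_def
proof (rule Gr_sum)
  fix e assume e: "e \<in> Poly_Mapping.keys f"
  have "mon r h e \<in> Gr \<phi> (\<Sum>i\<le>r. int (Poly_Mapping.lookup e i) * c i)"
    unfolding mon_def by (rule Gr_prod[OF ad]) (use Gr_power[OF ad] h in auto)
  then have "cst (Poly_Mapping.lookup f e) * mon r h e \<in> Gr \<phi> (0 + (\<Sum>i\<le>r. int (Poly_Mapping.lookup e i) * c i))"
    by (rule Gr_mult[OF ad Gr_cst[OF ad]])
  then show "cst (Poly_Mapping.lookup f e) * mon r h e \<in> Gr \<phi> w"
    by (rule Gr_mono) (use f[OF e] in \<open>simp add: mult.commute\<close>)
qed

lemma cst_Xvar: "cst c * Xvar j = Poly_Mapping.single (Poly_Mapping.single j 1) c"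
  by (simp add: cst_def Xvar_def mult_single)

lemma Gr_lin_form:
  assumes "\<And>j. j \<le> r \<Longrightarrow> M i j \<noteq> 0 \<Longrightarrow> w \<le> \<phi> (Poly_Mapping.single j 1)"
  shows "lin_form r M i \<in> Gr \<phi> w"
  unfolding lin_form_def cst_Xvar by (rule Gr_sum) (use assms in \<open>auto simp: Gr_def\<close>)

lemma Gr_lin_subst:
  assumes ad: "additive \<phi>" and h: "\<And>i j. i \<le> r \<Longrightarrow> j \<le> r \<Longrightarrow> M i j \<noteq> 0 \<Longrightarrow> c i \<le> \<phi> (Poly_Mapping.single j 1)"
    and f: "\<And>e. e \<in> Poly_Mapping.keys f \<Longrightarrow> w \<le> (\<Sum>i\<le>r. c i * int (Poly_Mapping.lookup e i))"
  shows "\<forall>e\<in>Poly_Mapping.keys (lin_subst r M f). w \<le> \<phi> e"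
proof -
  have "lin_subst r M f \<in> Gr \<phi> w"
    unfolding lin_subst_ev by (rule Gr_ev[OF ad _ f]) (auto intro!: Gr_lin_form h)
  then show ?thesis by (simp add: Gr_def)
qed

definition tot :: "nat \<Rightarrow> (nat \<Rightarrow>\<^sub>0 nat) \<Rightarrow> int" where
  "tot r e = (\<Sum>i\<le>r. int (Poly_Mapping.lookup e i))"

lemma additive_weight: "additive (weight r a)"
  by (simp add: additive_def weight_def lookup_add sum.distrib algebra_simps)
lemma additive_tot: "additive (tot r)"
  by (simp add: additive_def tot_def lookup_add sum.distrib)
lemma additive_ntot: "additive (\<lambda>e. - tot r e)"
  by (simp add: additive_def tot_def lookup_add sum.distrib)
lemma additive_var: "additive (\<lambda>e. - int (Poly_Mapping.lookup e c))"
  by (simp add: additive_def lookup_add)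

lemma tot_single: "j \<le> r \<Longrightarrow> tot r (Poly_Mapping.single j 1) = 1"
  unfolding tot_def
  by (subst sum.cong[OF refl, where h="\<lambda>i. if i = j then 1 else 0"]) (auto simp: lookup_single when_def)
lemma tot_single': "j \<le> r \<Longrightarrow> tot r (Poly_Mapping.single j (Suc 0)) = 1"
  using tot_single by simp

lemma lin_subst_inv:
  assumes "\<forall>e\<in>Poly_Mapping.keys f. \<forall>i>r. Poly_Mapping.lookup e i = 0"
    and "\<forall>i\<le>r. \<forall>j\<le>r. mm r M N i j = Idm i j"
  shows "lin_subst r N (lin_subst r M f) = f"
proof -
  have "lin_subst r N (lin_subst r M f) = lin_subst r (mm r M N) f" by (rule lin_subst_comp)
  also have "\<dots> = lin_subst r Idm f" by (rule lin_subst_cong) (use assms in auto)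
  also have "\<dots> = f" by (rule lin_subst_Id[OF assms(1)])
  finally show ?thesis .
qed

lemma homog_lin_subst:
  assumes hf: "homog_form r d f" and M: "invertible_mat r M"
  shows "homog_form r d (lin_subst r M f)"
proof -
  let ?g = "lin_subst r M f"
  have sup: "\<forall>e\<in>Poly_Mapping.keys f. \<forall>i>r. Poly_Mapping.lookup e i = 0"
    using hf by (simp add: homog_form_def)
  obtain N where N: "\<forall>i\<le>r. \<forall>j\<le>r. mm r M N i j = Idm i j" using M unfolding invertible_mat_mm_iff by blast
  have "?g \<noteq> 0"
  proof
    assume "?g = 0"
    then have "lin_subst r N ?g = 0" by simp
    then show False using lin_subst_inv[OF sup N] hf by (simp add: homog_form_def)
  qed
  moreover have "\<forall>e\<in>Poly_Mapping.keys ?g. \<forall>i>r. Poly_Mapping.lookup e i = 0"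
  proof (intro ballI allI impI)
    fix e i assume e: "e \<in> Poly_Mapping.keys ?g" and i: "r < i"
    have "\<forall>e\<in>Poly_Mapping.keys ?g. 0 \<le> - int (Poly_Mapping.lookup e i)"
      by (rule Gr_lin_subst[OF additive_var, where c="\<lambda>_. 0"]) (use i in \<open>auto simp: lookup_single when_def\<close>)
    then show "Poly_Mapping.lookup e i = 0" using e by auto
  qed
  moreover have "\<forall>e\<in>Poly_Mapping.keys ?g. (\<Sum>i\<le>r. Poly_Mapping.lookup e i) = d"
  proof
    fix e assume e: "e \<in> Poly_Mapping.keys ?g"
    have ftot: "\<And>e. e \<in> Poly_Mapping.keys f \<Longrightarrow> (\<Sum>i\<le>r. int (Poly_Mapping.lookup e i)) = int d"
      using hf unfolding homog_form_def by (metis of_nat_sum)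
    have "\<forall>e\<in>Poly_Mapping.keys ?g. int d \<le> tot r e"
      by (rule Gr_lin_subst[OF additive_tot, where c="\<lambda>_. 1"]) (use ftot in \<open>auto simp: tot_single'\<close>)
    moreover have "\<forall>e\<in>Poly_Mapping.keys ?g. - int d \<le> - tot r e"
      by (rule Gr_lin_subst[OF additive_ntot, where c="\<lambda>_. -1"]) (use ftot in \<open>auto simp: tot_single' sum_negf\<close>)
    ultimately have "tot r e = int d" using e by force
    then show "(\<Sum>i\<le>r. Poly_Mapping.lookup e i) = d" by (simp add: tot_def flip: of_nat_sum)
  qed
  ultimately show ?thesis by (simp add: homog_form_def)
qed


definition colrep :: "nat \<Rightarrow> (nat \<Rightarrow> 'k::field) \<Rightarrow> nat \<Rightarrow> nat \<Rightarrow> 'k" where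
  "colrep j v i l = (if l = j then v i else Idm i l)"

lemma colrep_mul:
  assumes j: "j \<le> r" and vw: "v j * w j = 1" and w: "\<And>i. i \<noteq> j \<Longrightarrow> w i = - v i * w j"
    and i: "i \<le> r" and l: "l \<le> r"
  shows "mm r (colrep j v) (colrep j w) i l = Idm i l"
proof (cases "l = j")
  case False
  have "mm r (colrep j v) (colrep j w) i l = mm r (colrep j v) Idm i l"
    by (rule mm_cong_right) (use False in \<open>simp add: colrep_def\<close>)
  also have "\<dots> = Idm i l" using mm_Id_right[OF l, of "colrep j v" i] False by (simp add: colrep_def)
  finally show ?thesis .
next
  case True
  have "mm r (colrep j v) (colrep j w) i l = (\<Sum>m\<le>r. colrep j v i m * w m)"
    using True by (simp add: mm_def colrep_def)
  also have "\<dots> = colrep j v i j * w j + (\<Sum>m\<in>{..r}-{j}. colrep j v i m * w m)"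
    using j by (simp add: sum.remove)
  also have "(\<Sum>m\<in>{..r}-{j}. colrep j v i m * w m) = (\<Sum>m\<in>{..r}-{j}. if m = i then w m else 0)"
    by (rule sum.cong) (auto simp: colrep_def Idm_def)
  also have "\<dots> = (if i = j then 0 else w i)" using i by (simp add: sum.delta)
  finally have X0: "mm r (colrep j v) (colrep j w) i l = colrep j v i j * w j + (if i = j then 0 else w i)" .
  have "colrep j v i j = v i" by (simp add: colrep_def)
  with X0 have X: "mm r (colrep j v) (colrep j w) i l = v i * w j + (if i = j then 0 else w i)" by simp
  show ?thesis
  proof (cases "i = j")
    case True then show ?thesis using X vw \<open>l = j\<close> by (simp add: Idm_def)
  next
    case False then show ?thesis using X w[OF False] \<open>l = j\<close> by (simp add: Idm_def)
  qed
qed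

lemma inv_colrep:
  assumes j: "j \<le> (r::nat)" and vj: "v j \<noteq> (0::'k::field)"
  shows "invertible_mat r (colrep j v)"
  unfolding invertible_mat_mm_iff
proof (intro exI allI impI conjI)
  define w where "w i = (if i = j then 1 / v j else - v i / v j)" for i
  fix i l assume i: "i \<le> r" and l: "l \<le> r"
  show "mm r (colrep j v) (colrep j w) i l = Idm i l"
    by (rule colrep_mul[OF j _ _ i l]) (use vj in \<open>auto simp: w_def\<close>)
  show "mm r (colrep j w) (colrep j v) i l = Idm i l"
    by (rule colrep_mul[OF j _ _ i l]) (use vj in \<open>auto simp: w_def field_simps\<close>)
qed

definition sw :: "nat \<Rightarrow> nat \<Rightarrow> nat" where
  "sw k i = (if i = 0 then k else if i = k then 0 else i)"

lemma sw_sw[simp]: "sw k (sw k i) = i" by (simp add: sw_def)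
lemma sw_le: "k \<le> r \<Longrightarrow> i \<le> r \<Longrightarrow> sw k i \<le> r" by (simp add: sw_def)

definition swm :: "nat \<Rightarrow> nat \<Rightarrow> nat \<Rightarrow> 'k::field" where "swm k i l = Idm (sw k i) l"

lemma inv_swm: assumes k: "k \<le> r" shows "invertible_mat r (swm k :: nat \<Rightarrow> nat \<Rightarrow> 'k::field)"
  unfolding invertible_mat_mm_iff
proof (intro exI allI impI conjI)
  fix i l assume i: "i \<le> r" and l: "l \<le> r"
  have "mm r (swm k) (swm k) i l = (\<Sum>m\<le>r. if m = sw k i then (Idm (sw k m) l::'k) else 0)"
    unfolding mm_def by (rule sum.cong) (auto simp: swm_def Idm_def)
  also have "\<dots> = Idm i l" using sw_le[OF k i] by simp
  finally show "mm r (swm k) (swm k) i l = (Idm i l :: 'k)" .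
  then show "mm r (swm k) (swm k) i l = (Idm i l :: 'k)" .
qed

lemma exists_col0:
  assumes "\<exists>i\<le>r. p i \<noteq> (0::'k::field)"
  shows "\<exists>M. invertible_mat r M \<and> (\<forall>i\<le>r. M i 0 = p i)"
proof -
  obtain k where k: "k \<le> r" "p k \<noteq> 0" using assms by blast
  define M where "M = mm r (colrep k p) (swm k)"
  have "invertible_mat r M" unfolding M_def by (rule inv_mm[OF inv_colrep[of k r p, OF k(1) k(2)] inv_swm[OF k(1)]])
  moreover have "\<forall>i\<le>r. M i 0 = p i"
  proof (intro allI impI)
    fix i assume "i \<le> r"
    have "M i 0 = (\<Sum>l\<le>r. if l = k then colrep k p i l else 0)"
      unfolding M_def mm_def by (rule sum.cong) (auto simp: swm_def Idm_def sw_def)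
    also have "\<dots> = p i" using k by (simp add: colrep_def)
    finally show "M i 0 = p i" .
  qed
  ultimately show ?thesis by blast
qed

lemma least_facts:
  assumes hg: "homog_form r d g"
  defines "n \<equiv> (LEAST j. \<exists>e\<in>Poly_Mapping.keys g. Poly_Mapping.lookup e 0 = d - j)"
  shows "n \<le> d \<and> (\<exists>e\<in>Poly_Mapping.keys g. Poly_Mapping.lookup e 0 = d - n) \<and>
         (\<forall>e\<in>Poly_Mapping.keys g. Poly_Mapping.lookup e 0 \<le> d - n)"
proof -
  have le: "Poly_Mapping.lookup e 0 \<le> d" if "e \<in> Poly_Mapping.keys g" for e
  proof -
    have "(\<Sum>i\<le>r. Poly_Mapping.lookup e i) = d" using hg that by (simp add: homog_form_def)
    moreover have "Poly_Mapping.lookup e 0 \<le> (\<Sum>i\<le>r. Poly_Mapping.lookup e i)"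
      by (rule member_le_sum) auto
    ultimately show ?thesis by simp
  qed
  have "Poly_Mapping.keys g \<noteq> {}" using hg by (simp add: homog_form_def)
  then obtain e0 where e0: "e0 \<in> Poly_Mapping.keys g" by blast
  have P: "\<exists>e\<in>Poly_Mapping.keys g. Poly_Mapping.lookup e 0 = d - (d - Poly_Mapping.lookup e0 0)"
    using e0 le[OF e0] by auto
  have 1: "\<exists>e\<in>Poly_Mapping.keys g. Poly_Mapping.lookup e 0 = d - n"
    unfolding n_def by (rule LeastI_ex) (use P in blast)
  have 2: "n \<le> d" unfolding n_def by (rule Least_le[THEN order_trans]) (rule P, simp)
  have 3: "\<forall>e\<in>Poly_Mapping.keys g. Poly_Mapping.lookup e 0 \<le> d - n"
  proof (rule ccontr)
    assume "\<not> ?thesis"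
    then obtain e where e: "e \<in> Poly_Mapping.keys g" "Poly_Mapping.lookup e 0 > d - n" by auto
    have "n \<le> d - Poly_Mapping.lookup e 0"
      unfolding n_def by (rule Least_le) (use e le[OF e(1)] in auto)
    then show False using e(2) 2 le[OF e(1)] by linarith
  qed
  show ?thesis using 1 2 3 by blast
qed

lemma mult_at_facts:
  assumes hf: "homog_form r d f" and p: "\<exists>i\<le>r. p i \<noteq> (0::'k::field)"
  shows "\<exists>M1. invertible_mat r M1 \<and> (\<forall>i\<le>r. M1 i 0 = p i) \<and> mult_at r d f p \<le> d \<and>
     (\<exists>e\<in>Poly_Mapping.keys (lin_subst r M1 f). Poly_Mapping.lookup e 0 = d - mult_at r d f p) \<and>
     (\<forall>e\<in>Poly_Mapping.keys (lin_subst r M1 f). Poly_Mapping.lookup e 0 \<le> d - mult_at r d f p)"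
proof -
  define M1 where "M1 = (SOME M. invertible_mat r M \<and> (\<forall>i\<le>r. M i 0 = p i))"
  have M1: "invertible_mat r M1 \<and> (\<forall>i\<le>r. M1 i 0 = p i)"
    using someI_ex[OF exists_col0[OF p]] unfolding M1_def .
  have eq: "mult_at r d f p = (LEAST j. \<exists>e\<in>Poly_Mapping.keys (lin_subst r M1 f). Poly_Mapping.lookup e 0 = d - j)"
    unfolding mult_at_def M1_def Let_def ..
  show ?thesis
    using M1 least_facts[OF homog_lin_subst[OF hf conjunct1[OF M1]]] unfolding eq[symmetric] by blast
qed


lemma key_ineq:
  fixes m K s P Q T :: int
  assumes m: "m \<ge> 1" and s: "s \<ge> 0"
    and H: "\<And>t. t > T \<Longrightarrow> (t*m + K)^2 * s \<le> m^2 * (t^2 * s + 2*t*P + Q)"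
  shows "K * s \<le> m * P"
proof (rule ccontr)
  assume "\<not> ?thesis"
  then have D: "K * s - m * P \<ge> 1" by simp
  define t where "t = max (max T (m^2 * Q)) 0 + 1"
  have tT: "t > T" and tQ: "t > m^2 * Q" and t0: "t \<ge> 1" by (auto simp: t_def)
  have "(t*m + K)^2 * s = t^2 * m^2 * s + 2*t*m*(K*s) + K^2 * s"
    by (simp add: power2_eq_square algebra_simps)
  moreover have "m^2 * (t^2 * s + 2*t*P + Q) = t^2 * m^2 * s + 2*t*m*(m*P) + m^2 * Q"
    by (simp add: power2_eq_square algebra_simps)
  ultimately have "2*t*m*(K*s) + K^2 * s \<le> 2*t*m*(m*P) + m^2 * Q" using H[OF tT] by linarith
  moreover have "K^2 * s \<ge> 0" using s by simp
  ultimately have E: "2*t*m*(K*s - m*P) \<le> m^2 * Q" by (simp add: algebra_simps)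
  have "m * (K*s - m*P) \<ge> 1" using m D by (metis mult_mono' mult_1 zero_le_one)
  then have "t * (m * (K*s - m*P)) \<ge> t * 1" using t0 by (intro mult_left_mono) auto
  then have "2*t*m*(K*s - m*P) \<ge> 2 * t" by (simp add: algebra_simps)
  with E tQ t0 show False by linarith
qed

lemma weight_single: "k \<le> r \<Longrightarrow> weight r a (Poly_Mapping.single k (Suc 0)) = a k"
  unfolding weight_def
  by (subst sum.cong[OF refl, where h="\<lambda>i. if i = k then a k else 0"]) (auto simp: lookup_single when_def)

lemma norm_pos: "nontriv_onepar r a \<Longrightarrow> onepar_norm r a > 0"
proof -
  assume "nontriv_onepar r a"
  then obtain i where i: "i \<le> r" "a i \<noteq> 0" by (auto simp: nontriv_onepar_def)
  have "(real_of_int (a i))^2 \<le> (\<Sum>l\<le>r. (real_of_int (a l))^2)"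
    by (rule member_le_sum) (use i in auto)
  moreover have "(real_of_int (a i))^2 > 0" using i by simp
  ultimately have "(\<Sum>l\<le>r. (real_of_int (a l))^2) > 0" by linarith
  then show ?thesis unfolding onepar_norm_def by simp
qed

lemma norm_sq: "(onepar_norm r a)^2 = real_of_int (\<Sum>i\<le>r. (a i)^2)"
  unfolding onepar_norm_def by (simp add: sum_nonneg)


theorem theorem4p3:
  fixes f :: "'k::alg_closed_field mpoly" and r d :: nat and a :: "nat \<Rightarrow> int" and \<delta> :: real
  assumes "r \<ge> 1" and "d \<ge> 1"
    and "homog_form r d f"
    and "unstable r f"
    and "(\<Sum>i\<le>r. a i) = 0" and "indivisible r a"
    and "\<delta> > 0"
    and "in_stratum r f a \<delta>"
  shows "(onepar_norm r a * \<delta> - of_int (Min (a ` {..r})) * real d)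
            / of_int (Max (a ` {..r}) - Min (a ` {..r})) \<le> real (hyp_mult r d f)
      \<and> real (hyp_mult r d f) \<le> real (r * d) / real (r + 1)
            - \<delta> * of_int (Min (a ` {..r})) / onepar_norm r a"
proof -
  note hf = assms(3)
  from assms(8) obtain M0 where nt: "nontriv_onepar r a" and M0: "invertible_mat r M0"
    and mx: "\<And>M' a'. invertible_mat r M' \<Longrightarrow> nontriv_onepar r a' \<Longrightarrow> mu_ratio r M' a' f \<le> mu_ratio r M0 a f"
    and dl: "mu_ratio r M0 a f = \<delta>"
    unfolding in_stratum_def by blast
  obtain N0 where N0: "\<forall>i\<le>r. \<forall>j\<le>r. mm r M0 N0 i j = Idm i j \<and> mm r N0 M0 i j = Idm i j"
    using M0 unfolding invertible_mat_mm_iff by blast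
  define g where "g = lin_subst r M0 f"
  have hg: "homog_form r d g" unfolding g_def by (rule homog_lin_subst[OF hf M0])
  define m where "m = mu_diag r a g"
  define nr where "nr = onepar_norm r a"
  have nrpos: "nr > 0" unfolding nr_def by (rule norm_pos[OF nt])
  have dm: "\<delta> = m / nr" using dl by (simp add: mu_ratio_def mu_ops_def m_def nr_def g_def)
  have mdl: "real_of_int m = nr * \<delta>" using dm nrpos by simp
  have mpos: "m \<ge> 1"
  proof -
    have "real_of_int m > 0" using mdl nrpos assms(7) by simp
    then show ?thesis by simp
  qed
  have kg: "\<forall>e\<in>Poly_Mapping.keys g. m \<le> weight r a e"
    unfolding m_def mu_diag_def by (auto intro: Min_le)
  define A where "A = Min (a ` {..r})"
  define B where "B = Max (a ` {..r})"
  have Ale: "\<And>i. i \<le> r \<Longrightarrow> A \<le> a i" unfolding A_def by (auto intro: Min_le)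
  have Bge: "\<And>i. i \<le> r \<Longrightarrow> a i \<le> B" unfolding B_def by (auto intro: Max_ge)
  have AB: "A < B"
  proof (rule ccontr)
    assume "\<not> A < B"
    then have eq: "\<And>i. i \<le> r \<Longrightarrow> a i = A" using Ale Bge by (meson dual_order.trans leI order_antisym)
    then have "(\<Sum>i\<le>r. a i) = (\<Sum>i\<le>r. A)" by simp
    then have "A = 0" using assms(5) by simp
    then show False using nt eq by (auto simp: nontriv_onepar_def)
  qed
  define HS where "HS = {mult_at r d f p | p. \<exists>i\<le>r. p i \<noteq> 0}"
  have HSsub: "HS \<subseteq> {..d}"
    unfolding HS_def using mult_at_facts[OF hf] by fastforce
  have HSfin: "finite HS" using HSsub finite_subset by blast
  have HSne: "HS \<noteq> {}"
  proof -
    have "mult_at r d f (\<lambda>i. 1) \<in> HS" unfolding HS_def by (auto intro!: exI[of _ "\<lambda>i. 1"])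
    then show ?thesis by blast
  qed
  have hm: "hyp_mult r d f = Max HS" unfolding hyp_mult_def HS_def ..
  have lower: "(nr * \<delta> - of_int A * real d) / of_int (B - A) \<le> real (hyp_mult r d f)"
  proof -
    have "Min (a ` {..r}) \<in> a ` {..r}" by (rule Min_in) auto
    then obtain i0 where i0': "i0 \<le> r" "Min (a ` {..r}) = a i0" by (metis atMost_iff imageE)
    then have i0: "i0 \<le> r" "a i0 = A" unfolding A_def by auto
    define p where "p i = M0 i i0" for i
    have pnz: "\<exists>i\<le>r. p i \<noteq> 0"
    proof (rule ccontr)
      assume "\<not> ?thesis" then have "\<forall>i\<le>r. p i = 0" by auto
      then have "mm r N0 M0 i0 i0 = 0" by (simp add: mm_def p_def)
      moreover have "mm r N0 M0 i0 i0 = 1" using N0 i0 by (simp add: Idm_def)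
      ultimately show False by simp
    qed
    define n where "n = mult_at r d f p"
    obtain M1 where M1: "invertible_mat r M1" and col: "\<forall>i\<le>r. M1 i 0 = p i" and nle: "n \<le> d"
      and wit: "\<exists>e\<in>Poly_Mapping.keys (lin_subst r M1 f). Poly_Mapping.lookup e 0 = d - n"
      using mult_at_facts[OF hf pnz] unfolding n_def by blast
    define K where "K = mm r N0 M1"
    have g1: "lin_subst r M1 f = lin_subst r K g"
    proof -
      have "lin_subst r K g = lin_subst r (mm r M0 K) f" unfolding g_def by (rule lin_subst_comp)
      also have "\<dots> = lin_subst r M1 f"
      proof (rule lin_subst_cong)
        fix i j assume i: "i \<le> r" and j: "j \<le> r"
        have "mm r M0 K i j = mm r (mm r M0 N0) M1 i j" by (simp add: K_def mm_assoc)
        also have "\<dots> = mm r Idm M1 i j" by (rule mm_cong_left) (use N0 i in auto)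
        also have "\<dots> = M1 i j" by (rule mm_Id_left[OF i])
        finally show "mm r M0 K i j = M1 i j" .
      qed
      finally show ?thesis by simp
    qed
    have Kcol: "K i 0 = Idm i i0" if i: "i \<le> r" for i
    proof -
      have "K i 0 = mm r N0 M0 i i0" unfolding K_def mm_def using col by (simp add: p_def)
      also have "\<dots> = Idm i i0" using N0 i i0 by auto
      finally show ?thesis .
    qed
    define J where "J = Max ((\<lambda>e. Poly_Mapping.lookup e i0) ` Poly_Mapping.keys g)"
    have kne: "Poly_Mapping.keys g \<noteq> {}" using hg by (simp add: homog_form_def)
    have Jge: "\<forall>e\<in>Poly_Mapping.keys g. Poly_Mapping.lookup e i0 \<le> J" unfolding J_def by auto
    have "J \<in> (\<lambda>e. Poly_Mapping.lookup e i0) ` Poly_Mapping.keys g"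
      unfolding J_def by (rule Max_in) (use kne in auto)
    then obtain es where es: "es \<in> Poly_Mapping.keys g" "Poly_Mapping.lookup es i0 = J"
      by (metis imageE)
    have deg: "\<forall>e\<in>Poly_Mapping.keys (lin_subst r K g). - int J \<le> - int (Poly_Mapping.lookup e 0)"
    proof (rule Gr_lin_subst[OF additive_var, where c="\<lambda>i. if i = i0 then -1 else 0"])
      fix i j assume i: "i \<le> r" and j: "j \<le> r" and Kij: "K i j \<noteq> 0"
      show "(if i = i0 then -1 else 0) \<le> - int (Poly_Mapping.lookup (Poly_Mapping.single j 1) 0)"
      proof (cases "i = i0")
        case True then show ?thesis by (simp add: lookup_single when_def)
      next
        case False
        then have "j \<noteq> 0" using Kij Kcol[OF i] by (metis Idm_def)
        then show ?thesis using False by (simp add: lookup_single when_def)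
      qed
    next
      fix e assume e: "e \<in> Poly_Mapping.keys g"
      have "(\<Sum>i\<le>r. (if i = i0 then -1 else 0) * int (Poly_Mapping.lookup e i)) = (\<Sum>i\<le>r. if i = i0 then - int (Poly_Mapping.lookup e i0) else 0)"
        by (rule sum.cong) auto
      also have "\<dots> = - int (Poly_Mapping.lookup e i0)" using i0 by simp
      finally show "- int J \<le> (\<Sum>i\<le>r. (if i = i0 then -1 else 0) * int (Poly_Mapping.lookup e i))"
        using Jge e by simp
    qed
    have nJ: "int d - int J \<le> int n"
    proof -
      obtain e1 where e1: "e1 \<in> Poly_Mapping.keys (lin_subst r M1 f)" "Poly_Mapping.lookup e1 0 = d - n"
        using wit by blast
      have "d - n \<le> J" using deg e1 g1 by force
      then show ?thesis using nle by linarith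
    qed
    have tot_es: "(\<Sum>i\<le>r. int (Poly_Mapping.lookup es i)) = int d"
      using hg es(1) unfolding homog_form_def by (metis of_nat_sum)
    have "weight r a es = a i0 * int (Poly_Mapping.lookup es i0) + (\<Sum>i\<in>{..r}-{i0}. a i * int (Poly_Mapping.lookup es i))"
      unfolding weight_def using i0 by (simp add: sum.remove)
    also have "\<dots> \<le> A * int J + (\<Sum>i\<in>{..r}-{i0}. B * int (Poly_Mapping.lookup es i))"
      using es i0 Bge by (auto intro!: add_mono sum_mono mult_right_mono)
    also have "(\<Sum>i\<in>{..r}-{i0}. B * int (Poly_Mapping.lookup es i)) = B * (int d - int J)"
      using tot_es es i0 by (simp add: sum_distrib_left[symmetric] sum.remove)
    finally have wes: "weight r a es \<le> A * int J + B * (int d - int J)" .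
    have "m \<le> weight r a es" using kg es(1) by blast
    then have mle: "m - A * int d \<le> (B - A) * (int d - int J)" using wes by (simp add: algebra_simps)
    have "(nr * \<delta> - of_int A * real d) / of_int (B - A) = real_of_int (m - A * int d) / real_of_int (B - A)"
      using mdl by simp
    also have "\<dots> \<le> real_of_int (int d - int J)"
    proof -
      have mleR: "real_of_int (m - A * int d) \<le> real_of_int (int d - int J) * real_of_int (B - A)"
        using mle by (metis of_int_le_iff of_int_mult mult.commute)
      have "real_of_int (B - A) > 0" using AB by simp
      then show ?thesis using mleR by (simp only: pos_divide_le_eq)
    qed
    also have "\<dots> \<le> real n" using nJ by linarith
    also have "real n \<le> real (hyp_mult r d f)"
    proof -
      have "n \<in> HS" unfolding HS_def n_def using pnz by blast
      then show ?thesis unfolding hm using Max_ge[OF HSfin] by simp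
    qed
    finally show ?thesis .
  qed
  have upper: "real (mult_at r d f p) \<le> real (r * d) / real (r + 1) - \<delta> * of_int A / nr"
    if pnz: "\<exists>i\<le>r. p i \<noteq> 0" for p
  proof -
    define n where "n = mult_at r d f p"
    obtain M1 where M1: "invertible_mat r M1" and col: "\<forall>i\<le>r. M1 i 0 = p i" and nle: "n \<le> d"
      and allk: "\<forall>e\<in>Poly_Mapping.keys (lin_subst r M1 f). Poly_Mapping.lookup e 0 \<le> d - n"
      using mult_at_facts[OF hf pnz] unfolding n_def by blast
    obtain N1 where N1: "\<forall>i\<le>r. \<forall>j\<le>r. mm r M1 N1 i j = Idm i j \<and> mm r N1 M1 i j = Idm i j"
      using M1 unfolding invertible_mat_mm_iff by blast
    define q where "q i = (\<Sum>l\<le>r. N0 i l * p l)" for i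
    have Mq: "(\<Sum>k\<le>r. M0 i k * q k) = p i" if i: "i \<le> r" for i
    proof -
      have "(\<Sum>k\<le>r. M0 i k * q k) = (\<Sum>l\<le>r. mm r M0 N0 i l * p l)"
        unfolding q_def mm_def by (simp add: sum_distrib_left sum_distrib_right mult.assoc) (rule sum.swap)
      also have "\<dots> = (\<Sum>l\<le>r. Idm i l * p l)" using N0 i by (intro sum.cong) auto
      also have "\<dots> = p i" using i by (simp add: Idm_def ifmul1)
      finally show ?thesis .
    qed
    have qnz: "\<exists>i\<le>r. q i \<noteq> 0"
    proof (rule ccontr)
      assume "\<not> ?thesis"
      then have "\<forall>i\<le>r. p i = 0" using Mq by (metis (no_types, lifting) atMost_iff mult_zero_right sum.neutral)
      then show False using pnz by blast
    qed
    define S where "S = {i. i \<le> r \<and> q i \<noteq> 0}"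
    have Sfin: "finite S" unfolding S_def by simp
    have Sne: "S \<noteq> {}" unfolding S_def using qnz by blast
    have "Max (a ` S) \<in> a ` S" by (rule Max_in) (use Sfin Sne in auto)
    then obtain j where jS: "j \<in> S" "Max (a ` S) = a j" by (metis imageE)
    have jr: "j \<le> r" and qj: "q j \<noteq> 0" using jS unfolding S_def by auto
    have ajmax: "a i \<le> a j" if "i \<le> r" "q i \<noteq> 0" for i
      using that jS Sfin unfolding S_def by (metis (mono_tags, lifting) Max_ge finite_imageI image_eqI mem_Collect_eq \<open>Max (a ` S) = a j\<close> S_def)
    define u where "u = colrep j q"
    define M2 where "M2 = mm r M0 u"
    have M2inv: "invertible_mat r M2" unfolding M2_def u_def by (rule inv_mm[OF M0 inv_colrep[of j r q, OF jr qj]])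
    define g' where "g' = lin_subst r M2 f"
    have g'u: "g' = lin_subst r u g" unfolding g'_def g_def M2_def by (simp add: lin_subst_comp)
    have hg': "homog_form r d g'" unfolding g'_def by (rule homog_lin_subst[OF hf M2inv])
    have wt: "\<forall>e\<in>Poly_Mapping.keys g'. m \<le> weight r a e"
      unfolding g'u
    proof (rule Gr_lin_subst[OF additive_weight, where c=a])
      fix i k assume i: "i \<le> r" and k: "k \<le> r" and uik: "u i k \<noteq> 0"
      have "a i \<le> a k"
      proof (cases "k = j")
        case True then show ?thesis using uik ajmax[OF i] by (simp add: u_def colrep_def)
      next
        case False then show ?thesis using uik by (simp add: u_def colrep_def Idm_def split: if_splits)
      qed
      then show "a i \<le> weight r a (Poly_Mapping.single k 1)" using weight_single[OF k] by simp
    next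
      fix e assume "e \<in> Poly_Mapping.keys g"
      then show "m \<le> (\<Sum>i\<le>r. a i * int (Poly_Mapping.lookup e i))" using kg by (simp add: weight_def)
    qed
    define K' where "K' = mm r N1 M2"
    have g'K: "g' = lin_subst r K' (lin_subst r M1 f)"
    proof -
      have "lin_subst r K' (lin_subst r M1 f) = lin_subst r (mm r M1 K') f" by (rule lin_subst_comp)
      also have "\<dots> = g'" unfolding g'_def
      proof (rule lin_subst_cong)
        fix i l assume i: "i \<le> r" and l: "l \<le> r"
        have "mm r M1 K' i l = mm r (mm r M1 N1) M2 i l" by (simp add: K'_def mm_assoc)
        also have "\<dots> = mm r Idm M2 i l" by (rule mm_cong_left) (use N1 i in auto)
        also have "\<dots> = M2 i l" by (rule mm_Id_left[OF i])
        finally show "mm r M1 K' i l = M2 i l" .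
      qed
      finally show ?thesis by simp
    qed
    have M2col: "M2 l j = M1 l 0" if l: "l \<le> r" for l
    proof -
      have "M2 l j = (\<Sum>k\<le>r. M0 l k * q k)" unfolding M2_def mm_def u_def colrep_def by simp
      then show ?thesis using Mq[OF l] col l by simp
    qed
    have K'col: "K' i j = Idm i 0" if i: "i \<le> r" for i
    proof -
      have "K' i j = mm r N1 M1 i 0" unfolding K'_def mm_def using M2col by simp
      also have "\<dots> = Idm i 0" using N1 i by auto
      finally show ?thesis .
    qed
    have degj: "\<forall>e\<in>Poly_Mapping.keys g'. - int (d - n) \<le> - int (Poly_Mapping.lookup e j)"
      unfolding g'K
    proof (rule Gr_lin_subst[OF additive_var, where c="\<lambda>i. if i = 0 then -1 else 0"])
      fix i k assume i: "i \<le> r" and k: "k \<le> r" and Kik: "K' i k \<noteq> 0"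
      show "(if i = 0 then -1 else 0) \<le> - int (Poly_Mapping.lookup (Poly_Mapping.single k 1) j)"
      proof (cases "i = 0")
        case True then show ?thesis by (simp add: lookup_single when_def)
      next
        case False
        then have "k \<noteq> j" using Kik K'col[OF i] by (metis Idm_def)
        then show ?thesis using False by (simp add: lookup_single when_def)
      qed
    next
      fix e assume e: "e \<in> Poly_Mapping.keys (lin_subst r M1 f)"
      have "(\<Sum>i\<le>r. (if i = 0 then -1 else 0) * int (Poly_Mapping.lookup e i)) = (\<Sum>i\<le>r. if i = 0 then - int (Poly_Mapping.lookup e 0) else 0)"
        by (rule sum.cong) auto
      also have "\<dots> = - int (Poly_Mapping.lookup e 0)" by simp
      finally show "- int (d - n) \<le> (\<Sum>i\<le>r. (if i = 0 then -1 else 0) * int (Poly_Mapping.lookup e i))"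
        using allk e by simp
    qed
    define bb where "bb i = (if i = j then - int r else 1)" for i
    define att where "att t i = t * a i + bb i" for t i
    define K where "K = int (r+1) * int n - int r * int d"
    define s where "s = (\<Sum>i\<le>r. (a i)^2)"
    define P where "P = (\<Sum>i\<le>r. a i * bb i)"
    define Q where "Q = (\<Sum>i\<le>r. (bb i)^2)"
    have bb1: "bb i = 1 - (if i = j then int r + 1 else 0)" for i by (simp add: bb_def)
    have sbb: "(\<Sum>i\<le>r. bb i) = 0"
      unfolding bb1 using jr by (simp add: sum_subtractf)
    have Pv: "P = - (int r + 1) * a j"
    proof -
      have "P = (\<Sum>i\<le>r. a i - (if i = j then (int r + 1) * a j else 0))"
        unfolding P_def bb1 by (rule sum.cong) (auto simp: algebra_simps)
      also have "\<dots> = - (int r + 1) * a j" using jr assms(5) by (simp add: sum_subtractf algebra_simps)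
      finally show ?thesis .
    qed
    have wat: "weight r (att t) e = t * weight r a e + (\<Sum>i\<le>r. int (Poly_Mapping.lookup e i)) - (int r + 1) * int (Poly_Mapping.lookup e j)" for t e
    proof -
      have "weight r (att t) e = (\<Sum>i\<le>r. t * (a i * int (Poly_Mapping.lookup e i)) + int (Poly_Mapping.lookup e i) - (if i = j then (int r + 1) * int (Poly_Mapping.lookup e j) else 0))"
        unfolding weight_def att_def bb1 by (rule sum.cong) (auto simp: algebra_simps)
      also have "\<dots> = t * weight r a e + (\<Sum>i\<le>r. int (Poly_Mapping.lookup e i)) - (int r + 1) * int (Poly_Mapping.lookup e j)"
        using jr by (simp add: sum_subtractf sum.distrib weight_def sum_distrib_left)
      finally show ?thesis .
    qed
    have wlow: "t * m + K \<le> weight r (att t) e" if t: "t \<ge> 0" and e: "e \<in> Poly_Mapping.keys g'" for t e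
    proof -
      have "m \<le> weight r a e" using wt e by blast
      then have 1: "t * m \<le> t * weight r a e" using t by (rule mult_left_mono)
      have 2: "(\<Sum>i\<le>r. int (Poly_Mapping.lookup e i)) = int d"
        using hg' e unfolding homog_form_def by (metis of_nat_sum)
      have "int (Poly_Mapping.lookup e j) \<le> int (d - n)" using degj e by auto
      then have 3: "int (Poly_Mapping.lookup e j) \<le> int d - int n" using nle by simp
      have "(int r + 1) * int (Poly_Mapping.lookup e j) \<le> (int r + 1) * (int d - int n)"
        using 3 by (rule mult_left_mono) simp
      then show ?thesis using 1 2 unfolding wat K_def by (simp add: algebra_simps)
    qed
    have kne': "Poly_Mapping.keys g' \<noteq> {}" using hg' by (simp add: homog_form_def)
    have mulow: "t * m + K \<le> mu_diag r (att t) g'" if t: "t \<ge> 0" for t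
      unfolding mu_diag_def using wlow[OF t] kne' by (subst Min_ge_iff) auto
    define T where "T = int r * int d + int r + 1"
    have H: "(t*m + K)^2 * s \<le> m^2 * (t^2 * s + 2*t*P + Q)" if tT: "t > T" for t
    proof -
      have rd0: "int r * int d \<ge> 0" by simp
      have t0: "t \<ge> 1" using tT rd0 unfolding T_def by linarith
      obtain i1 where i1: "i1 \<le> r" "a i1 \<noteq> 0" using nt by (auto simp: nontriv_onepar_def)
      have ntat: "nontriv_onepar r (att t)"
        unfolding nontriv_onepar_def
      proof (intro conjI exI[of _ i1])
        show "(\<Sum>i\<le>r. att t i) = 0" unfolding att_def using sbb assms(5)
          by (simp add: sum.distrib sum_distrib_left[symmetric])
        show "i1 \<le> r" by (rule i1(1))
        have "\<bar>t * a i1\<bar> \<ge> t" using i1(2) t0 by (simp add: abs_mult)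
        moreover have "\<bar>bb i1\<bar> \<le> int r" using assms(1) by (simp add: bb_def)
        moreover have "t > int r" using tT rd0 unfolding T_def by linarith
        ultimately show "att t i1 \<noteq> 0" unfolding att_def by linarith
      qed
      have Xpos: "t * m + K > 0"
      proof -
        have "t * m \<ge> t * 1" using mpos t0 by (intro mult_left_mono) auto
        moreover have "K \<ge> - (int r * int d)" unfolding K_def by simp
        ultimately show ?thesis using tT unfolding T_def by linarith
      qed
      define nt' where "nt' = onepar_norm r (att t)"
      have ntpos: "nt' > 0" unfolding nt'_def by (rule norm_pos[OF ntat])
      have rat: "mu_ratio r M2 (att t) f \<le> \<delta>" using mx[OF M2inv ntat] dl by simp
      have "real_of_int (t * m + K) / nt' \<le> real_of_int (mu_diag r (att t) g') / nt'"
      proof (rule divide_right_mono)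
        show "real_of_int (t * m + K) \<le> real_of_int (mu_diag r (att t) g')"
          using mulow[of t] t0 by (simp only: of_int_le_iff)
      qed (use ntpos in simp)
      also have "\<dots> = mu_ratio r M2 (att t) f"
        by (simp add: mu_ratio_def mu_ops_def g'_def nt'_def)
      finally have "real_of_int (t * m + K) / nt' \<le> real_of_int m / nr" using rat dm by simp
      then have "real_of_int (t * m + K) * nr \<le> real_of_int m * nt'"
        using ntpos nrpos by (simp add: divide_le_eq le_divide_eq field_simps)
      then have "(real_of_int (t * m + K) * nr)^2 \<le> (real_of_int m * nt')^2"
      proof (rule power_mono)
        have "real_of_int (t * m + K) > 0" using Xpos by (simp only: of_int_0_less_iff)
        then show "0 \<le> real_of_int (t * m + K) * nr" using nrpos by simp
      qed
      then have "real_of_int (t * m + K) ^2 * nr^2 \<le> real_of_int m ^2 * nt'^2"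
        by (simp add: power_mult_distrib)
      moreover have "nr^2 = real_of_int s" unfolding nr_def s_def by (rule norm_sq)
      moreover have "nt'^2 = real_of_int (\<Sum>i\<le>r. (att t i)^2)" unfolding nt'_def by (rule norm_sq)
      moreover have "(\<Sum>i\<le>r. (att t i)^2) = t^2 * s + 2*t*P + Q"
        unfolding att_def s_def P_def Q_def
        by (simp add: power2_eq_square algebra_simps sum.distrib sum_distrib_left)
      ultimately have "real_of_int ((t*m + K)^2 * s) \<le> real_of_int (m^2 * (t^2 * s + 2*t*P + Q))"
        by simp
      then show ?thesis by (simp only: of_int_le_iff)
    qed
    have s0: "s \<ge> 0" unfolding s_def by (simp add: sum_nonneg)
    have KsP: "K * s \<le> m * P" by (rule key_ineq[OF mpos s0 H])
    have "A \<le> a j" using Ale[OF jr] .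
    then have "m * a j \<ge> m * A" using mpos by (intro mult_left_mono) auto
    then have "(int r + 1) * (m * A) \<le> (int r + 1) * (m * a j)" by (rule mult_left_mono) simp
    moreover have "m * P = - ((int r + 1) * (m * a j))" unfolding Pv by (simp add: algebra_simps)
    ultimately have "m * P \<le> - (int r + 1) * (m * A)" by linarith
    with KsP have KI: "K * s \<le> - (int r + 1) * (m * A)" by linarith
    have "real_of_int (K * s) \<le> real_of_int (- (int r + 1) * (m * A))" using KI by (simp only: of_int_le_iff)
    then have "real_of_int K * nr^2 \<le> - (real r + 1) * ((nr * \<delta>) * real_of_int A)"
      using norm_sq[of r a] mdl unfolding nr_def[symmetric] s_def[symmetric] by simp
    then have "(real_of_int K * nr) * nr \<le> (- (real r + 1) * \<delta> * real_of_int A) * nr"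
      by (simp add: power2_eq_square algebra_simps)
    then have F: "real_of_int K * nr \<le> - (real r + 1) * \<delta> * real_of_int A"
      using nrpos by simp
    then have F2: "(real r + 1) * real n * nr \<le> real r * real d * nr - (real r + 1) * \<delta> * real_of_int A"
      unfolding K_def by (simp add: algebra_simps)
    have den: "(real r + 1) * nr > 0" using nrpos by simp
    have eqr: "real (r * d) / real (r + 1) - \<delta> * of_int A / nr
        = (real r * real d * nr - (real r + 1) * \<delta> * real_of_int A) / ((real r + 1) * nr)"
      using nrpos by (simp add: field_simps)
    have "real n \<le> (real r * real d * nr - (real r + 1) * \<delta> * real_of_int A) / ((real r + 1) * nr)"
      using F2 den by (simp add: le_divide_eq mult_ac)
    then show ?thesis unfolding n_def[symmetric] eqr .
  qed
  have "real (hyp_mult r d f) \<le> real (r * d) / real (r + 1) - \<delta> * of_int A / nr"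
  proof -
    have "Max HS \<in> HS" using Max_in[OF HSfin HSne] .
    then obtain p where "\<exists>i\<le>r. p i \<noteq> 0" "Max HS = mult_at r d f p" unfolding HS_def by blast
    then show ?thesis using upper hm by simp
  qed
  then show ?thesis using lower unfolding nr_def A_def B_def by simp
qed

end
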